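(* Let $A$, $B$, $C$ be payoff Conway games and let $\sigma$ be a winning strategy on $A^*\otimes B$ and $\tau$ a winning strategy on $B^*\otimes C$. Then the composite strategy $\sigma;\tau$ on $A^*\otimes C$ is also winning.
   Context: A Conway game $A=(V_A,E_A,\lambda_A)$ is a rooted directed graph $(V_A,E_A)$ with root $\star_A$ together with a polarity map $\lambda_A:E_A\to\{-1,+1\}$ on moves ($-1$ = Opponent, $+1$ = Player). A path is a finite sequence of consecutive moves $x_0\to x_1\to\cdots\to x_k$, written $s:x_0\twoheadrightarrow x_k$; $\epsilon_x:x\twoheadrightarrow x$ is the empty path at $x$; $s;t$ denotes concatenation; $\mathrm{Path}_A$ is the set of paths. A play is a path starting at $\star_A$; it is alternating if consecutive moves have opposite polarities. A strategy $\sigma$ on $A$ is a set of alternating plays of even length that contains the empty play, whose nonempty plays start with an Opponent move, which is closed under even-length prefixes ($s\cdot m\cdot n\in\sigma\Rightarrow s\in\sigma$), and which is deterministic ($s\cdot m\cdot n\in\sigma$ and $s\cdot m\cdot n'\in\sigma$ imply $n=n'$). A payoff Conway game is a Conway game together with a payoff $\kappa_A=(\kappa_A^+,\kappa_A^-):\mathrm{Path}_A\to\mathbb{N}\times\mathbb{N}$ satisfying: (compatibility) for every move $m$, $\lambda_A(m)=-1\Rightarrow\kappa_A^+(m)=0$ and $\lambda_A(m)=+1\Rightarrow\kappa_A^-(m)=0$; (suffix domination) $\kappa_A(t)\le\kappa_A(s;t)$ for $s:x\twoheadrightarrow y$, $t:y\twoheadrightarrow z$; (subadditivity) $\kappa_A(s;t)\le\kappa_A(s)+\kappa_A(t)$;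 (norm) $\kappa_A(\epsilon_x)=(0,0)$; here $\le$ and $+$ on $\mathbb{N}\times\mathbb{N}$ are componentwise. Dual: $A^*=(V_A,E_A,-\lambda_A,(\kappa_A^-,\kappa_A^+))$. Tensor $A\otimes B$: positions $V_A\times V_B$ with root $(\star_A,\star_B)$; moves $(x,y)\to(x',y)$ for $(x,x')\in E_A$ and $(x,y)\to(x,y')$ for $(y,y')\in E_B$, with the polarity of the underlying move; payoff $\kappa_{A\otimes B}(s)=\kappa_A(s_{|A})+\kappa_B(s_{|B})$, where $s_{|A}$, $s_{|B}$ are the projections of $s$. A strategy $\sigma$ plays a path $t:x\twoheadrightarrow y$ if there is a play $s:\star\twoheadrightarrow x$ in $\sigma$ with $s;t\in\sigma$. A strategy is winning if every path $s$ it plays satisfies $\kappa^+(s)=0\Rightarrow\kappa^-(s)=0$. Composition: an interaction $u\in int(A,B,C)$ is a sequence of moves of $A$, $B$, $C$ whose projections on $A^*\otimes B$, $B^*\otimes C$ and $A^*\otimes C$ are plays; for $\sigma$ on $A^*\otimes B$ and $\tau$ on $B^*\otimes C$, $\sigma;\tau=\{u_{|A,C}\mid u\in int(A,B,C),\ u_{|A,B}\in\sigma,\ u_{|B,C}\in\tau\}$. *)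

theory Defs
  imports Main
begin

text \<open>Positions of type 'v, moves of type 'm; each move has a
source and a target position (a rooted directed graph whose edges are the moves),
a polarity (-1 Opponent, +1 Player) and the two payoff components on paths
(paths are represented as lists of consecutive moves; the empty list is the empty path).\<close>

record ('v, 'm) pgame =
  pos  :: "'v set"
  mv   :: "'m set"
  src  :: "'m \<Rightarrow> 'v"
  tgt  :: "'m \<Rightarrow> 'v"
  root :: 'v
  pol  :: "'m \<Rightarrow> int"
  payp :: "'m list \<Rightarrow> nat"
  paym :: "'m list \<Rightarrow> nat"

fun is_chain :: "('v, 'm, 'z) pgame_scheme \<Rightarrow> 'm list \<Rightarrow> bool" where
  "is_chain G [] = True"
| "is_chain G [m] = True"
| "is_chain G (m # n # r) = (tgt G m = src G n \<and> is_chain G (n # r))"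

definition is_path :: "('v, 'm, 'z) pgame_scheme \<Rightarrow> 'm list \<Rightarrow> bool" where
  "is_path G s \<longleftrightarrow> set s \<subseteq> mv G \<and> is_chain G s"

definition is_play :: "('v, 'm, 'z) pgame_scheme \<Rightarrow> 'm list \<Rightarrow> bool" where
  "is_play G s \<longleftrightarrow> is_path G s \<and> (s \<noteq> [] \<longrightarrow> src G (hd s) = root G)"

definition alternating :: "('v, 'm, 'z) pgame_scheme \<Rightarrow> 'm list \<Rightarrow> bool" where
  "alternating G s \<longleftrightarrow> (\<forall>i. Suc i < length s \<longrightarrow> pol G (s ! Suc i) = - pol G (s ! i))"

definition conway_game :: "('v, 'm, 'z) pgame_scheme \<Rightarrow> bool" where
  "conway_game G \<longleftrightarrow> root G \<in> pos G
     \<and> (\<forall>m\<in>mv G. src G m \<in> pos G \<and> tgt G m \<in> pos G \<and> pol G m \<in> {-1, 1})"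

definition payoff_game :: "('v, 'm, 'z) pgame_scheme \<Rightarrow> bool" where
  "payoff_game G \<longleftrightarrow> conway_game G
     \<and> (\<forall>m\<in>mv G. (pol G m = -1 \<longrightarrow> payp G [m] = 0) \<and> (pol G m = 1 \<longrightarrow> paym G [m] = 0))
     \<and> (\<forall>s t. is_path G (s @ t) \<longrightarrow> payp G t \<le> payp G (s @ t) \<and> paym G t \<le> paym G (s @ t))
     \<and> (\<forall>s t. is_path G (s @ t) \<longrightarrow>
            payp G (s @ t) \<le> payp G s + payp G t \<and> paym G (s @ t) \<le> paym G s + paym G t)
     \<and> payp G [] = 0 \<and> paym G [] = 0"

definition dual :: "('v, 'm) pgame \<Rightarrow> ('v, 'm) pgame" where
  "dual G = G\<lparr> pol := (\<lambda>m. - pol G m), payp := paym G, paym := payp G \<rparr>"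

text \<open>Tensor product: a move of A at B-position y is Inl (m, y); a move of B at A-position x
is Inr (x, n).\<close>

fun projL :: "(('ma \<times> 'vb) + ('va \<times> 'mb)) list \<Rightarrow> 'ma list" where
  "projL [] = []"
| "projL (Inl (m, y) # r) = m # projL r"
| "projL (Inr _ # r) = projL r"

fun projR :: "(('ma \<times> 'vb) + ('va \<times> 'mb)) list \<Rightarrow> 'mb list" where
  "projR [] = []"
| "projR (Inl _ # r) = projR r"
| "projR (Inr (x, n) # r) = n # projR r"

definition tensor :: "('va, 'ma) pgame \<Rightarrow> ('vb, 'mb) pgame
    \<Rightarrow> ('va \<times> 'vb, ('ma \<times> 'vb) + ('va \<times> 'mb)) pgame" where
  "tensor A B = \<lparr>
     pos = pos A \<times> pos B,
     mv = {Inl (m, y) | m y. m \<in> mv A \<and> y \<in> pos B} \<union> {Inr (x, n) | x n. x \<in> pos A \<and> n \<in> mv B},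
     src = (\<lambda>e. case e of Inl (m, y) \<Rightarrow> (src A m, y) | Inr (x, n) \<Rightarrow> (x, src B n)),
     tgt = (\<lambda>e. case e of Inl (m, y) \<Rightarrow> (tgt A m, y) | Inr (x, n) \<Rightarrow> (x, tgt B n)),
     root = (root A, root B),
     pol = (\<lambda>e. case e of Inl (m, y) \<Rightarrow> pol A m | Inr (x, n) \<Rightarrow> pol B n),
     payp = (\<lambda>s. payp A (projL s) + payp B (projR s)),
     paym = (\<lambda>s. paym A (projL s) + paym B (projR s)) \<rparr>"

definition strategy :: "('v, 'm, 'z) pgame_scheme \<Rightarrow> 'm list set \<Rightarrow> bool" where
  "strategy G \<sigma> \<longleftrightarrow>
     (\<forall>s\<in>\<sigma>. is_play G s \<and> alternating G s \<and> even (length s))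
     \<and> [] \<in> \<sigma>
     \<and> (\<forall>s\<in>\<sigma>. s \<noteq> [] \<longrightarrow> pol G (hd s) = -1)
     \<and> (\<forall>s m n. s @ [m, n] \<in> \<sigma> \<longrightarrow> s \<in> \<sigma>)
     \<and> (\<forall>s m n n'. s @ [m, n] \<in> \<sigma> \<and> s @ [m, n'] \<in> \<sigma> \<longrightarrow> n = n')"

definition plays :: "'m list set \<Rightarrow> 'm list \<Rightarrow> bool" where
  "plays \<sigma> t \<longleftrightarrow> (\<exists>s. s \<in> \<sigma> \<and> s @ t \<in> \<sigma>)"

definition winning :: "('v, 'm, 'z) pgame_scheme \<Rightarrow> 'm list set \<Rightarrow> bool" where
  "winning G \<sigma> \<longleftrightarrow> (\<forall>t. plays \<sigma> t \<longrightarrow> (payp G t = 0 \<longrightarrow> paym G t = 0))"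

text \<open>Turning a sequence of moves of two games into a sequence of moves of the tensor
game, by tracking the current position of each component starting from (x, y).\<close>
fun lift :: "('ma \<Rightarrow> 'va) \<Rightarrow> ('mb \<Rightarrow> 'vb) \<Rightarrow> 'va \<Rightarrow> 'vb \<Rightarrow> ('ma + 'mb) list
             \<Rightarrow> (('ma \<times> 'vb) + ('va \<times> 'mb)) list" where
  "lift ta tb x y [] = []"
| "lift ta tb x y (Inl m # r) = Inl (m, y) # lift ta tb (ta m) y r"
| "lift ta tb x y (Inr n # r) = Inr (x, n) # lift ta tb x (tb n) r"

definition restrAB :: "('ma + 'mb + 'mc) list \<Rightarrow> ('ma + 'mb) list" where
  "restrAB u = concat (map (\<lambda>e. case e of Inl a \<Rightarrow> [Inl a] | Inr (Inl b) \<Rightarrow> [Inr b] | Inr (Inr c) \<Rightarrow> []) u)"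

definition restrBC :: "('ma + 'mb + 'mc) list \<Rightarrow> ('mb + 'mc) list" where
  "restrBC u = concat (map (\<lambda>e. case e of Inl a \<Rightarrow> [] | Inr (Inl b) \<Rightarrow> [Inl b] | Inr (Inr c) \<Rightarrow> [Inr c]) u)"

definition restrAC :: "('ma + 'mb + 'mc) list \<Rightarrow> ('ma + 'mc) list" where
  "restrAC u = concat (map (\<lambda>e. case e of Inl a \<Rightarrow> [Inl a] | Inr (Inl b) \<Rightarrow> [] | Inr (Inr c) \<Rightarrow> [Inr c]) u)"

definition uAB :: "('va, 'ma) pgame \<Rightarrow> ('vb, 'mb) pgame \<Rightarrow> ('ma + 'mb + 'mc) list
    \<Rightarrow> (('ma \<times> 'vb) + ('va \<times> 'mb)) list" where
  "uAB A B u = lift (tgt A) (tgt B) (root A) (root B) (restrAB u)"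

definition uBC :: "('vb, 'mb) pgame \<Rightarrow> ('vc, 'mc) pgame \<Rightarrow> ('ma + 'mb + 'mc) list
    \<Rightarrow> (('mb \<times> 'vc) + ('vb \<times> 'mc)) list" where
  "uBC B C u = lift (tgt B) (tgt C) (root B) (root C) (restrBC u)"

definition uAC :: "('va, 'ma) pgame \<Rightarrow> ('vc, 'mc) pgame \<Rightarrow> ('ma + 'mb + 'mc) list
    \<Rightarrow> (('ma \<times> 'vc) + ('va \<times> 'mc)) list" where
  "uAC A C u = lift (tgt A) (tgt C) (root A) (root C) (restrAC u)"

definition interaction :: "('va, 'ma) pgame \<Rightarrow> ('vb, 'mb) pgame \<Rightarrow> ('vc, 'mc) pgame
    \<Rightarrow> ('ma + 'mb + 'mc) list \<Rightarrow> bool" where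
  "interaction A B C u \<longleftrightarrow>
     is_play (tensor (dual A) B) (uAB A B u)
     \<and> is_play (tensor (dual B) C) (uBC B C u)
     \<and> is_play (tensor (dual A) C) (uAC A C u)"

definition comp :: "('va, 'ma) pgame \<Rightarrow> ('vb, 'mb) pgame \<Rightarrow> ('vc, 'mc) pgame
    \<Rightarrow> (('ma \<times> 'vb) + ('va \<times> 'mb)) list set \<Rightarrow> (('mb \<times> 'vc) + ('vb \<times> 'mc)) list set
    \<Rightarrow> (('ma \<times> 'vc) + ('va \<times> 'mc)) list set" where
  "comp A B C \<sigma> \<tau> = {uAC A C u | u. interaction A B C u \<and> uAB A B u \<in> \<sigma> \<and> uBC B C u \<in> \<tau>}"

end

theory Submission
  imports Defs
begin


lemma chain_Cons_iff:
  "is_chain G (m # xs) \<longleftrightarrow> (xs \<noteq> [] \<longrightarrow> tgt G m = src G (hd xs)) \<and> is_chain G xs"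
  by (cases xs) auto

lemma chain_suffix: "is_chain G (s @ t) \<Longrightarrow> is_chain G t"
  by (induction s) (auto simp: chain_Cons_iff)

lemma path_suffix: "is_path G (s @ t) \<Longrightarrow> is_path G t"
  unfolding is_path_def using chain_suffix by auto

lemma tensor_simps:
  "mv (tensor G H) = {Inl (m, y) | m y. m \<in> mv G \<and> y \<in> pos H} \<union> {Inr (x, n) | x n. x \<in> pos G \<and> n \<in> mv H}"
  "src (tensor G H) (Inl (m, y)) = (src G m, y)"
  "src (tensor G H) (Inr (x, n)) = (x, src H n)"
  "tgt (tensor G H) (Inl (m, y)) = (tgt G m, y)"
  "tgt (tensor G H) (Inr (x, n)) = (x, tgt H n)"
  "pol (tensor G H) (Inl (m, y)) = pol G m"
  "pol (tensor G H) (Inr (x, n)) = pol H n"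
  "payp (tensor G H) s = payp G (projL s) + payp H (projR s)"
  "paym (tensor G H) s = paym G (projL s) + paym H (projR s)"
  by (simp_all add: tensor_def)

lemma dual_simps:
  "mv (dual G) = mv G" "src (dual G) = src G" "tgt (dual G) = tgt G" "root (dual G) = root G"
  "pol (dual G) m = - pol G m" "payp (dual G) = paym G" "paym (dual G) = payp G"
  by (simp_all add: dual_def)

lemma tensor_chain:
  "is_chain (tensor G H) s \<Longrightarrow>
     is_chain G (projL s) \<and> (projL s \<noteq> [] \<longrightarrow> src G (hd (projL s)) = fst (src (tensor G H) (hd s)))
   \<and> is_chain H (projR s) \<and> (projR s \<noteq> [] \<longrightarrow> src H (hd (projR s)) = snd (src (tensor G H) (hd s)))"
proof (induction s)
  case Nil
  then show ?case by simp
next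
  case (Cons e s)
  have ch: "is_chain (tensor G H) s" and lk: "s \<noteq> [] \<Longrightarrow> tgt (tensor G H) e = src (tensor G H) (hd s)"
    using Cons.prems by (auto simp: chain_Cons_iff)
  note IH = Cons.IH[OF ch]
  have neL: "projL s \<noteq> [] \<Longrightarrow> s \<noteq> []" and neR: "projR s \<noteq> [] \<Longrightarrow> s \<noteq> []" by auto
  show ?case
  proof (cases e)
    case (Inl p)
    then obtain m y where e: "e = Inl (m, y)" by (cases p) auto
    show ?thesis using IH lk[symmetric] neL neR by (auto simp: e tensor_simps chain_Cons_iff)
  next
    case (Inr p)
    then obtain x n where e: "e = Inr (x, n)" by (cases p) auto
    show ?thesis using IH lk[symmetric] neL neR by (auto simp: e tensor_simps chain_Cons_iff)
  qed
qed

lemma tensor_mv_proj: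
  "set s \<subseteq> mv (tensor G H) \<Longrightarrow> set (projL s) \<subseteq> mv G \<and> set (projR s) \<subseteq> mv H"
proof (induction s)
  case Nil then show ?case by simp
next
  case (Cons e s)
  then show ?case by (cases e) (auto simp: tensor_simps)
qed

lemma tensor_path:
  "is_path (tensor G H) s \<Longrightarrow> is_path G (projL s) \<and> is_path H (projR s)"
  unfolding is_path_def using tensor_chain tensor_mv_proj by blast

definition lft :: "('a + 'b) list \<Rightarrow> 'a list" where
  "lft xs = concat (map (case_sum (\<lambda>a. [a]) (\<lambda>_. [])) xs)"
definition rgt :: "('a + 'b) list \<Rightarrow> 'b list" where
  "rgt xs = concat (map (case_sum (\<lambda>_. []) (\<lambda>b. [b])) xs)"

fun strip :: "(('ma \<times> 'vb) + ('va \<times> 'mb)) \<Rightarrow> 'ma + 'mb" where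
  "strip (Inl (m, y)) = Inl m"
| "strip (Inr (x, n)) = Inr n"

fun lend :: "('ma \<Rightarrow> 'va) \<Rightarrow> ('mb \<Rightarrow> 'vb) \<Rightarrow> 'va \<Rightarrow> 'vb \<Rightarrow> ('ma + 'mb) list \<Rightarrow> 'va \<times> 'vb" where
  "lend ta tb x y [] = (x, y)"
| "lend ta tb x y (Inl m # r) = lend ta tb (ta m) y r"
| "lend ta tb x y (Inr n # r) = lend ta tb x (tb n) r"

lemma lift_append:
  "lift ta tb x y (xs @ ys) = lift ta tb x y xs @ lift ta tb (fst (lend ta tb x y xs)) (snd (lend ta tb x y xs)) ys"
  by (induction ta tb x y xs rule: lift.induct) auto

lemma length_lift[simp]: "length (lift ta tb x y xs) = length xs"
  by (induction ta tb x y xs rule: lift.induct) auto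

lemma strip_lift[simp]: "map strip (lift ta tb x y xs) = xs"
  by (induction ta tb x y xs rule: lift.induct) auto

lemma projL_lift[simp]: "projL (lift ta tb x y xs) = lft xs"
  by (induction ta tb x y xs rule: lift.induct) (auto simp: lft_def)

lemma projR_lift[simp]: "projR (lift ta tb x y xs) = rgt xs"
  by (induction ta tb x y xs rule: lift.induct) (auto simp: rgt_def)

lemma pol_tensor_strip: "pol (tensor G H) e = case_sum (pol G) (pol H) (strip e)"
  by (cases e rule: strip.cases) (auto simp: tensor_simps)


definition aM :: "('ma + 'mb + 'mc) list \<Rightarrow> 'ma list" where
  "aM u = concat (map (\<lambda>e. case e of Inl a \<Rightarrow> [a] | Inr _ \<Rightarrow> []) u)"
definition bM :: "('ma + 'mb + 'mc) list \<Rightarrow> 'mb list" where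
  "bM u = concat (map (\<lambda>e. case e of Inr (Inl b) \<Rightarrow> [b] | _ \<Rightarrow> []) u)"
definition cM :: "('ma + 'mb + 'mc) list \<Rightarrow> 'mc list" where
  "cM u = concat (map (\<lambda>e. case e of Inr (Inr c) \<Rightarrow> [c] | _ \<Rightarrow> []) u)"

lemma restr_simps[simp]:
  "restrAB [] = []" "restrBC [] = []" "restrAC [] = []"
  "aM [] = []" "bM [] = []" "cM [] = []"
  "restrAB (Inl a # u) = Inl a # restrAB u"
  "restrAB (Inr (Inl b) # u) = Inr b # restrAB u"
  "restrAB (Inr (Inr c) # u) = restrAB u"
  "restrBC (Inl a # u) = restrBC u"
  "restrBC (Inr (Inl b) # u) = Inl b # restrBC u"
  "restrBC (Inr (Inr c) # u) = Inr c # restrBC u"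
  "restrAC (Inl a # u) = Inl a # restrAC u"
  "restrAC (Inr (Inl b) # u) = restrAC u"
  "restrAC (Inr (Inr c) # u) = Inr c # restrAC u"
  "aM (Inl a # u) = a # aM u" "aM (Inr x # u) = aM u"
  "bM (Inl a # u) = bM u" "bM (Inr (Inl b) # u) = b # bM u" "bM (Inr (Inr c) # u) = bM u"
  "cM (Inl a # u) = cM u" "cM (Inr (Inl b) # u) = cM u" "cM (Inr (Inr c) # u) = c # cM u"
  by (simp_all add: restrAB_def restrBC_def restrAC_def aM_def bM_def cM_def)

lemma restr_append[simp]:
  "restrAB (u @ v) = restrAB u @ restrAB v" "restrBC (u @ v) = restrBC u @ restrBC v"
  "restrAC (u @ v) = restrAC u @ restrAC v"
  "aM (u @ v) = aM u @ aM v" "bM (u @ v) = bM u @ bM v" "cM (u @ v) = cM u @ cM v"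
  by (simp_all add: restrAB_def restrBC_def restrAC_def aM_def bM_def cM_def)

lemma restr_lr[simp]:
  "lft (restrAB u) = aM u" "rgt (restrAB u) = bM u"
  "lft (restrBC u) = bM u" "rgt (restrBC u) = cM u"
  "lft (restrAC u) = aM u" "rgt (restrAC u) = cM u"
  by (induction u) (auto simp: lft_def rgt_def restrAB_def restrBC_def restrAC_def aM_def bM_def cM_def split: sum.splits)

lemma restr_len:
  "length (restrAB u) = length (aM u) + length (bM u)"
  "length (restrBC u) = length (bM u) + length (cM u)"
  "length (restrAC u) = length (aM u) + length (cM u)"
  by (induction u) (auto simp: restrAB_def restrBC_def restrAC_def aM_def bM_def cM_def split: sum.splits)

lemma strat_prefix:
  assumes "strategy G \<sigma>" "s @ r \<in> \<sigma>" "even (length s)"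
  shows "s \<in> \<sigma>"
  using assms(2)
proof (induction "length r" arbitrary: r rule: less_induct)
  case less
  show ?case
  proof (cases r rule: rev_cases)
    case Nil then show ?thesis using less by simp
  next
    case (snoc r1 n)
    have ev: "even (length (s @ r))" using less.prems assms(1) unfolding strategy_def by blast
    then have "r1 \<noteq> []" using assms(3) snoc by auto
    then obtain r2 m where r1: "r1 = r2 @ [m]" by (cases r1 rule: rev_cases) auto
    have "(s @ r2) @ [m, n] \<in> \<sigma>" using less.prems snoc r1 by simp
    then have "s @ r2 \<in> \<sigma>" using assms(1) unfolding strategy_def by blast
    then show ?thesis using less.hyps[of r2] snoc r1 by simp
  qed
qed

lemma strat_pol:
  assumes "strategy G \<sigma>" "s \<in> \<sigma>" "i < length s"
  shows "pol G (s ! i) = (if even i then -1 else 1)"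
  using assms(3)
proof (induction i)
  case 0
  then have "s \<noteq> []" by auto
  then show ?case using assms(1,2) unfolding strategy_def by (auto simp: hd_conv_nth)
next
  case (Suc i)
  have "alternating G s" using assms(1,2) unfolding strategy_def by blast
  then have "pol G (s ! Suc i) = - pol G (s ! i)" using Suc.prems unfolding alternating_def by blast
  then show ?case using Suc by auto
qed

lemma strat_pol_lift:
  assumes "strategy (tensor G H) \<sigma>" "lift ta tb x y (xs @ z # ys) \<in> \<sigma>"
  shows "case_sum (pol G) (pol H) z = (if even (length xs) then -1 else 1)"
proof -
  let ?s = "lift ta tb x y (xs @ z # ys)"
  have "pol (tensor G H) (?s ! length xs) = (if even (length xs) then -1 else 1)"
    using strat_pol[OF assms] by simp
  moreover have "strip (?s ! length xs) = z"
    using nth_map[of "length xs" ?s strip] strip_lift[of ta tb x y "xs @ z # ys"] by simp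
  ultimately show ?thesis by (simp add: pol_tensor_strip)
qed

lemma win_split:
  assumes "strategy T \<sigma>" "winning T \<sigma>" "lift ta tb x y (xs @ ys) \<in> \<sigma>" "even (length xs)"
    "payp T (lift ta tb (fst (lend ta tb x y xs)) (snd (lend ta tb x y xs)) ys) = 0"
  shows "paym T (lift ta tb (fst (lend ta tb x y xs)) (snd (lend ta tb x y xs)) ys) = 0"
proof -
  have "lift ta tb x y xs \<in> \<sigma>"
    using strat_prefix[OF assms(1), of "lift ta tb x y xs"] assms(3,4) by (simp add: lift_append)
  then have "plays \<sigma> (lift ta tb (fst (lend ta tb x y xs)) (snd (lend ta tb x y xs)) ys)"
    using assms(3) unfolding plays_def by (auto simp: lift_append)
  then show ?thesis using assms(2,5) unfolding winning_def by blast
qed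


lemma sum3_cases:
  obtains (A) a where "e = Inl a" | (B) b where "e = Inr (Inl b)" | (C) c where "e = Inr (Inr c)"
proof (cases e)
  case (Inl a) then show ?thesis using that by blast
next
  case (Inr x) then show ?thesis using that by (cases x) auto
qed

lemma chain_dual[simp]: "is_chain (dual G) s = is_chain G s"
  by (induction s rule: is_chain.induct) (simp_all add: dual_simps)

lemma path_dual[simp]: "is_path (dual G) s = is_path G s"
  by (simp add: is_path_def dual_simps)

lemma restrAC_split:
  "restrAC u = S @ T \<Longrightarrow> \<exists>p v. u = p @ v \<and> restrAC p = S \<and> restrAC v = T \<and> (S = [] \<longrightarrow> p = [])
      \<and> (S \<noteq> [] \<longrightarrow> (\<exists>p' e. p = p' @ [e] \<and> (\<forall>b. e \<noteq> Inr (Inl b))))"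
proof (induction u arbitrary: S)
  case Nil
  then show ?case by simp
next
  case (Cons e u)
  show ?case
  proof (cases "S = []")
    case True
    then show ?thesis using Cons.prems by (intro exI[of _ "[]"] exI[of _ "e # u"]) simp
  next
    case False
    show ?thesis
    proof (cases "\<exists>b. e = Inr (Inl b)")
      case True
      then obtain b where e: "e = Inr (Inl b)" by blast
      have "restrAC u = S @ T" using Cons.prems e by simp
      from Cons.IH[OF this] obtain p v where pv: "u = p @ v" "restrAC p = S" "restrAC v = T"
        "\<exists>p' e. p = p' @ [e] \<and> (\<forall>b. e \<noteq> Inr (Inl b))" using False by blast
      then obtain p' e' where "p = p' @ [e']" "\<forall>b. e' \<noteq> Inr (Inl b)" by blast
      then show ?thesis using pv False e
        by (intro exI[of _ "e # p"] exI[of _ v]) auto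
    next
      case nB: False
      then obtain x where rx: "restrAC [e] = [x]" by (cases e rule: sum3_cases) auto
      have rc: "restrAC (e # u) = x # restrAC u" using rx restr_append(3)[of "[e]" u] by simp
      obtain S' where S: "S = x # S'" "restrAC u = S' @ T" using Cons.prems False rc by (cases S) auto
      from Cons.IH[OF S(2)] obtain p v where pv: "u = p @ v" "restrAC p = S'" "restrAC v = T"
        "S' = [] \<longrightarrow> p = []" "S' \<noteq> [] \<longrightarrow> (\<exists>p' e. p = p' @ [e] \<and> (\<forall>b. e \<noteq> Inr (Inl b)))" by blast
      show ?thesis
      proof (cases "S' = []")
        case True
        then show ?thesis using pv S nB rx restr_append(3)[of "[e]" "[]"]
          by (intro exI[of _ "[e]"] exI[of _ v]) auto
      next
        case False
        then obtain p' e' where "p = p' @ [e']" "\<forall>b. e' \<noteq> Inr (Inl b)" using pv by blast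
        then show ?thesis using pv S rx restr_append(3)[of "[e]" p]
          by (intro exI[of _ "e # p"] exI[of _ v]) auto
      qed
    qed
  qed
qed



theorem mainTheorem2:
  fixes A :: "('va, 'ma) pgame" and B :: "('vb, 'mb) pgame" and C :: "('vc, 'mc) pgame"
    and \<sigma> :: "(('ma \<times> 'vb) + ('va \<times> 'mb)) list set"
    and \<tau> :: "(('mb \<times> 'vc) + ('vb \<times> 'mc)) list set"
  assumes "payoff_game A" and "payoff_game B" and "payoff_game C"
    and "strategy (tensor (dual A) B) \<sigma>" and "winning (tensor (dual A) B) \<sigma>"
    and "strategy (tensor (dual B) C) \<tau>" and "winning (tensor (dual B) C) \<tau>"
  shows "winning (tensor (dual A) C) (comp A B C \<sigma> \<tau>)"
  unfolding winning_def
proof (intro allI impI)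
  fix t
  assume pl: "plays (comp A B C \<sigma> \<tau>) t" and p0: "payp (tensor (dual A) C) t = 0"
  note pgA = assms(1)[unfolded payoff_game_def]
  note pgB = assms(2)[unfolded payoff_game_def]
  note pgC = assms(3)[unfolded payoff_game_def]
  obtain s where s1: "s \<in> comp A B C \<sigma> \<tau>" and s2: "s @ t \<in> comp A B C \<sigma> \<tau>"
    using pl unfolding plays_def by blast
  obtain u where uS: "uAB A B u \<in> \<sigma>" "uBC B C u \<in> \<tau>" "s = uAC A C u"
    using s1 unfolding comp_def by blast
  obtain u2 where u2S: "uAB A B u2 \<in> \<sigma>" "uBC B C u2 \<in> \<tau>" "s @ t = uAC A C u2"
    using s2 unfolding comp_def by blast
  define S where "S = restrAC u"
  have mS: "map strip s = S" using uS(3) by (simp add: S_def uAC_def)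
  have "restrAC u2 = map strip (s @ t)" using u2S(3) by (simp add: uAC_def)
  then have "restrAC u2 = S @ map strip t" using mS by simp
  from restrAC_split[OF this] obtain p v where pv: "u2 = p @ v" "restrAC p = S"
    "restrAC v = map strip t" "S = [] \<longrightarrow> p = []"
    "S \<noteq> [] \<longrightarrow> (\<exists>p' e. p = p' @ [e] \<and> (\<forall>b. e \<noteq> Inr (Inl b)))" by blast
  define xAC where "xAC = fst (lend (tgt A) (tgt C) (root A) (root C) (restrAC p))"
  define yAC where "yAC = snd (lend (tgt A) (tgt C) (root A) (root C) (restrAC p))"
  have "s @ t = lift (tgt A) (tgt C) (root A) (root C) (restrAC p) @ lift (tgt A) (tgt C) xAC yAC (restrAC v)"
    using u2S(3) pv(1) by (simp add: uAC_def lift_append xAC_def yAC_def)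
  moreover have "length (lift (tgt A) (tgt C) (root A) (root C) (restrAC p)) = length s"
    using pv(2) mS by (metis length_lift length_map)
  ultimately have teq: "t = lift (tgt A) (tgt C) xAC yAC (restrAC v)"
    by (metis append_eq_append_conv)
  have pA: "paym A (aM v) = 0" and pC: "payp C (cM v) = 0"
    using p0 by (simp_all add: teq tensor_simps dual_simps)
  have evAB2: "even (length (restrAB u2))" using u2S(1) assms(4) unfolding strategy_def
    by (metis length_lift uAB_def)
  have evBC2: "even (length (restrBC u2))" using u2S(2) assms(6) unfolding strategy_def
    by (metis length_lift uBC_def)
  have evAB: "even (length (restrAB u))" using uS(1) assms(4) unfolding strategy_def
    by (metis length_lift uAB_def)
  have evBC: "even (length (restrBC u))" using uS(2) assms(6) unfolding strategy_def
    by (metis length_lift uBC_def)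
  have pathAB: "is_path (tensor (dual A) B) (uAB A B u2)" using u2S(1) assms(4)
    unfolding strategy_def is_play_def by blast
  have pathBC: "is_path (tensor (dual B) C) (uBC B C u2)" using u2S(2) assms(6)
    unfolding strategy_def is_play_def by blast
  have pathA: "is_path A (aM u2)" using tensor_path[OF pathAB] by (simp add: uAB_def)
  have pathB: "is_path B (bM u2)" using tensor_path[OF pathAB] by (simp add: uAB_def)
  have pathC: "is_path C (cM u2)" using tensor_path[OF pathBC] by (simp add: uBC_def)
  have pathAv: "is_path A (aM v)" using pathA pv(1) path_suffix by (metis restr_append(4))
  have pathCv: "is_path C (cM v)" using pathC pv(1) path_suffix by (metis restr_append(6))
  have aw: "paym A (aM w) = 0" if "v = pre @ w" for pre w
  proof -
    have "paym A (aM w) \<le> paym A (aM pre @ aM w)" using pgA pathAv that by simp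
    then show ?thesis using pA that by simp
  qed
  have cw: "payp C (cM w) = 0" if "v = pre @ w" for pre w
  proof -
    have "payp C (cM w) \<le> payp C (cM pre @ cM w)" using pgC pathCv that by simp
    then show ?thesis using pC that by simp
  qed
  have sig: "payp A (aM w) = 0 \<and> paym B (bM w) = 0"
    if "v = pre @ w" "even (length (restrAB (p @ pre)))" "payp B (bM w) = 0" for pre w
  proof -
    have "uAB A B u2 = lift (tgt A) (tgt B) (root A) (root B) (restrAB (p @ pre) @ restrAB w)"
      using pv(1) that(1) by (simp add: uAB_def)
    then have m: "lift (tgt A) (tgt B) (root A) (root B) (restrAB (p @ pre) @ restrAB w) \<in> \<sigma>"
      using u2S(1) by simp
    from win_split[OF assms(4,5) m that(2)]
    show ?thesis using aw[OF that(1)] that(3) by (simp add: tensor_simps dual_simps)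
  qed
  have tau: "payp B (bM w) = 0 \<and> paym C (cM w) = 0"
    if "v = pre @ w" "even (length (restrBC (p @ pre)))" "paym B (bM w) = 0" for pre w
  proof -
    have "uBC B C u2 = lift (tgt B) (tgt C) (root B) (root C) (restrBC (p @ pre) @ restrBC w)"
      using pv(1) that(1) by (simp add: uBC_def)
    then have m: "lift (tgt B) (tgt C) (root B) (root C) (restrBC (p @ pre) @ restrBC w) \<in> \<tau>"
      using u2S(2) by simp
    from win_split[OF assms(6,7) m that(2)]
    show ?thesis using cw[OF that(1)] that(3) by (simp add: tensor_simps dual_simps)
  qed
  have evS: "even (length S)" using evAB evBC unfolding S_def by (auto simp: restr_len)
  have evsum: "even (length (restrAB p) + length (restrBC p))"
    using evS pv(2) by (auto simp: restr_len)
  have evp: "even (length (restrAB p)) \<and> even (length (restrBC p))"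
  proof (cases "S = []")
    case True
    then show ?thesis using pv(4) by simp
  next
    case False
    then obtain p' e where pe: "p = p' @ [e]" "\<forall>b. e \<noteq> Inr (Inl b)" using pv(5) by blast
    show ?thesis
    proof (rule ccontr)
      assume "\<not> ?thesis"
      then have oAB: "odd (length (restrAB p))" and oBC: "odd (length (restrBC p))" using evsum by auto
      have "u \<noteq> []" using False unfolding S_def by auto
      then obtain q e2 where q: "u = q @ [e2]" by (cases u rule: rev_cases) auto
      have e2nB: "\<forall>b. e2 \<noteq> Inr (Inl b)"
      proof (intro allI notI)
        fix b assume e2: "e2 = Inr (Inl b)"
        have m1: "lift (tgt A) (tgt B) (root A) (root B) (restrAB q @ Inr b # []) \<in> \<sigma>"
          using uS(1) q e2 by (simp add: uAB_def)
        have m2: "lift (tgt B) (tgt C) (root B) (root C) (restrBC q @ Inl b # []) \<in> \<tau>"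
          using uS(2) q e2 by (simp add: uBC_def)
        have "odd (length (restrAB q))" using evAB q e2 by simp
        then have "pol B b = 1" using strat_pol_lift[OF assms(4) m1] by simp
        moreover have "odd (length (restrBC q))" using evBC q e2 by simp
        then have "- pol B b = 1" using strat_pol_lift[OF assms(6) m2] by (simp add: dual_simps)
        ultimately show False by simp
      qed
      have "restrAC q @ restrAC [e2] = restrAC p' @ restrAC [e]"
        using pv(2) pe(1) q unfolding S_def by simp
      then have "e2 = e" using pe(2) e2nB
        by (cases e rule: sum3_cases; cases e2 rule: sum3_cases) auto
      show False
      proof (cases e rule: sum3_cases)
        case (A a)
        have m1: "lift (tgt A) (tgt B) (root A) (root B) (restrAB q @ Inl a # []) \<in> \<sigma>"
          using uS(1) q A \<open>e2 = e\<close> by (simp add: uAB_def)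
        have m2: "lift (tgt A) (tgt B) (root A) (root B) (restrAB p' @ Inl a # restrAB v) \<in> \<sigma>"
          using u2S(1) pv(1) pe(1) A by (simp add: uAB_def)
        have "odd (length (restrAB q))" using evAB q A \<open>e2 = e\<close> by simp
        then have "- pol A a = 1" using strat_pol_lift[OF assms(4) m1] by (simp add: dual_simps)
        moreover have "even (length (restrAB p'))" using oAB pe(1) A by simp
        then have "- pol A a = -1" using strat_pol_lift[OF assms(4) m2] by (simp add: dual_simps)
        ultimately show False by simp
      next
        case (B b) then show False using pe(2) by blast
      next
        case (C c)
        have m1: "lift (tgt B) (tgt C) (root B) (root C) (restrBC q @ Inr c # []) \<in> \<tau>"
          using uS(2) q C \<open>e2 = e\<close> by (simp add: uBC_def)
        have m2: "lift (tgt B) (tgt C) (root B) (root C) (restrBC p' @ Inr c # restrBC v) \<in> \<tau>"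
          using u2S(2) pv(1) pe(1) C by (simp add: uBC_def)
        have "odd (length (restrBC q))" using evBC q C \<open>e2 = e\<close> by simp
        then have "pol C c = 1" using strat_pol_lift[OF assms(6) m1] by simp
        moreover have "even (length (restrBC p'))" using oBC pe(1) C by simp
        then have "pol C c = -1" using strat_pol_lift[OF assms(6) m2] by simp
        ultimately show False by simp
      qed
    qed
  qed
  have core: "payp B (bM w) = 0 \<and> paym B (bM w) = 0" if "v = pre @ w" for pre w
    using that
  proof (induction w arbitrary: pre)
    case Nil
    then show ?case using pgB by simp
  next
    case (Cons e w)
    have IH: "payp B (bM w) = 0 \<and> paym B (bM w) = 0" using Cons.IH[of "pre @ [e]"] Cons.prems by simp
    show ?case
    proof (cases e rule: sum3_cases)
      case (A a) then show ?thesis using IH by simp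
    next
      case (C c) then show ?thesis using IH by simp
    next
      case (B m)
      have "bM u2 = bM (p @ pre) @ m # bM w" using pv(1) Cons.prems B by simp
      then have pm: "is_path B ([m] @ bM w)" using pathB path_suffix by (metis append_Cons append_Nil)
      then have mB: "m \<in> mv B" unfolding is_path_def by simp
      then have "pol B m = -1 \<or> pol B m = 1" using pgB unfolding conway_game_def by auto
      moreover have sub: "payp B ([m] @ bM w) \<le> payp B [m] + payp B (bM w)"
        "paym B ([m] @ bM w) \<le> paym B [m] + paym B (bM w)" using pgB pm by blast+
      moreover have m1: "lift (tgt A) (tgt B) (root A) (root B) (restrAB (p @ pre) @ Inr m # restrAB w) \<in> \<sigma>"
        using u2S(1) pv(1) Cons.prems B by (simp add: uAB_def)
      moreover have m2: "lift (tgt B) (tgt C) (root B) (root C) (restrBC (p @ pre) @ Inl m # restrBC w) \<in> \<tau>"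
        using u2S(2) pv(1) Cons.prems B by (simp add: uBC_def)
      ultimately consider "pol B m = -1" | "pol B m = 1" by blast
      then show ?thesis
      proof cases
        case 1
        have "payp B [m] = 0" using pgB mB 1 by blast
        then have z: "payp B (bM (e # w)) = 0" using sub IH B by simp
        have ev: "even (length (restrAB (p @ pre)))" using strat_pol_lift[OF assms(4) m1] 1
          by (simp split: if_splits)
        show ?thesis using sig[OF Cons.prems ev z] z by simp
      next
        case 2
        have "paym B [m] = 0" using pgB mB 2 by blast
        then have z: "paym B (bM (e # w)) = 0" using sub IH B by simp
        have ev: "even (length (restrBC (p @ pre)))" using strat_pol_lift[OF assms(6) m2] 2
          by (simp add: dual_simps split: if_splits)
        show ?thesis using tau[OF Cons.prems ev z] z by simp
      qed
    qed
  qed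
  have bz: "payp B (bM v) = 0 \<and> paym B (bM v) = 0" using core[of "[]" v] by simp
  have "payp A (aM v) = 0" using sig[of "[]" v] evp bz by simp
  moreover have "paym C (cM v) = 0" using tau[of "[]" v] evp bz by simp
  ultimately show "paym (tensor (dual A) C) t = 0"
    by (simp add: teq tensor_simps dual_simps)
qed

end
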